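(* Let $|q|<1$ and $|qa|<|z|$, with parameters such that no denominator vanishes. Then $$f(a,k,z,q)=\sum_{n=1}^{\infty}\frac{k q^n}{1-kq^n}+\sum_{n=1}^{\infty}\frac{q^n a/z}{1-q^n a/z}-\sum_{n=1}^{\infty}\frac{a q^n}{1-aq^n}-\sum_{n=1}^{\infty}\frac{q^n k/z}{1-q^n k/z}.$$
   Context: Notation: $(x;q)_n=(1-x)(1-xq)\cdots(1-xq^{n-1})$, $(x_1,\dots,x_m;q)_n=(x_1;q)_n\cdots(x_m;q)_n$. Define $$f(a,k,z,q):=\sum_{n=1}^{\infty}\frac{(q\sqrt{k},-q\sqrt{k},k,z,k/a;q)_{n}}{(\sqrt{k},-\sqrt{k},qk,qk/z,qa;q)_{n}(1-q^n)}\left(\frac{qa}{z}\right)^{n}.$$ *)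

theory Defs
  imports "HOL-Analysis.Analysis"
begin

definition qpoch :: "complex \<Rightarrow> complex \<Rightarrow> nat \<Rightarrow> complex" where
  "qpoch x q n = (\<Prod>j<n. 1 - x * q ^ j)"

definition f_term :: "complex \<Rightarrow> complex \<Rightarrow> complex \<Rightarrow> complex \<Rightarrow> nat \<Rightarrow> complex" where
  "f_term a k z q n =
     (qpoch (q * csqrt k) q n * qpoch (- q * csqrt k) q n * qpoch k q n * qpoch z q n * qpoch (k / a) q n)
     / (qpoch (csqrt k) q n * qpoch (- csqrt k) q n * qpoch (q * k) q n * qpoch (q * k / z) q n
        * qpoch (q * a) q n * (1 - q ^ n))
     * (q * a / z) ^ n"

definition f :: "complex \<Rightarrow> complex \<Rightarrow> complex \<Rightarrow> complex \<Rightarrow> complex" where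
  "f a k z q = (\<Sum>n. f_term a k z q (Suc n))"

end

theory Submission
  imports Defs
begin


lemma qpoch_Suc: "qpoch x q (Suc n) = qpoch x q n * (1 - x*q^n)"
  by (simp add: qpoch_def)

lemma qpoch_shift: "qpoch (x*q) q n * (1 - x) = qpoch x q (Suc n)"
proof (induction n)
  case 0 then show ?case by (simp add: qpoch_def)
next
  case (Suc n)
  have "qpoch (x*q) q (Suc n) * (1 - x) = (qpoch (x*q) q n * (1 - x)) * (1 - x*q^Suc n)"
    by (simp add: qpoch_Suc mult_ac)
  also have "\<dots> = qpoch x q (Suc (Suc n))" using Suc by (simp add: qpoch_Suc)
  finally show ?case .
qed

lemma qpoch_nz:
  assumes "\<forall>e. 1 - x*q^Suc e \<noteq> 0"
  shows "qpoch (q*x) q n \<noteq> 0"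
proof -
  have "\<forall>j. 1 - q*x*q^j \<noteq> 0" using assms by (metis mult.commute mult.left_commute power_Suc)
  then show ?thesis by (simp add: qpoch_def)
qed

definition Hyp :: "complex \<Rightarrow> complex \<Rightarrow> complex \<Rightarrow> complex \<Rightarrow> bool" where
"Hyp q a k w \<longleftrightarrow> q \<noteq> 0 \<and> norm q < 1 \<and> norm (q*a*w) < 1 \<and> (\<forall>e. 1 - k*q^Suc e \<noteq> 0)
   \<and> (\<forall>e. 1 - a*q^Suc e \<noteq> 0) \<and> (\<forall>e. 1 - (k*w)*q^Suc e \<noteq> 0)"

definition Cm :: "complex \<Rightarrow> complex \<Rightarrow> complex \<Rightarrow> complex \<Rightarrow> complex \<Rightarrow> nat \<Rightarrow> complex" where
"Cm q b a k w m = qpoch b q (Suc m) * (q*a)^(Suc m) * (\<Prod>j<m. w - q^j)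
    / (qpoch (q*a) q (m+2) * qpoch (q*(k*w)) q (m+3))"

lemma Hyp_nz:
  assumes "Hyp q a k w"
  shows "qpoch (q*a) q n \<noteq> 0" "qpoch (q*(k*w)) q n \<noteq> 0"
    "1 - k*q^Suc e \<noteq> 0" "1 - a*q^Suc e \<noteq> 0" "1 - k*w*q^Suc e \<noteq> 0" "1 - q^Suc e \<noteq> 0"
    "q \<noteq> 0"
proof -
  show "qpoch (q*a) q n \<noteq> 0" "qpoch (q*(k*w)) q n \<noteq> 0"
    using assms unfolding Hyp_def by (auto intro!: qpoch_nz)
  show "1 - k*q^Suc e \<noteq> 0" "1 - a*q^Suc e \<noteq> 0" "1 - k*w*q^Suc e \<noteq> 0" "q \<noteq> 0"
    using assms unfolding Hyp_def by auto
  have "norm q < 1" "norm q > 0" using assms unfolding Hyp_def by auto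
  then have "norm q ^ Suc e < 1" by (rule power_Suc_less_one[rotated])
  then have "norm (q^Suc e) < 1" by (simp only: norm_power)
  then show "1 - q^Suc e \<noteq> 0" by auto
qed

lemma Hyp_nz':
  assumes "Hyp q a k w" "n \<ge> 1"
  shows "1 - k*q^n \<noteq> 0" "1 - a*q^n \<noteq> 0" "1 - k*w*q^n \<noteq> 0" "1 - q^n \<noteq> 0"
proof -
  obtain e where "n = Suc e" using assms(2) by (metis Suc_le_D One_nat_def)
  then show "1 - k*q^n \<noteq> 0" "1 - a*q^n \<noteq> 0" "1 - k*w*q^n \<noteq> 0" "1 - q^n \<noteq> 0"
    using Hyp_nz[OF assms(1)] by blast+
qed

lemma Cm_Suc:
  assumes "Hyp q a k w"
  shows "Cm q b a k w (Suc m) = Cm q b a k w m *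
     ((1 - b*q^(Suc m)) * (q*a) * (w - q^m) / ((1 - a*q^(m+3)) * (1 - k*w*q^(m+4))))"
proof -
  have n1: "qpoch (q*a) q (m+2) \<noteq> 0" "qpoch (q*(k*w)) q (m+3) \<noteq> 0"
    using Hyp_nz[OF assms] by auto
  have n2: "1 - a*q^(m+3) \<noteq> 0" "1 - k*w*q^(m+4) \<noteq> 0"
    using Hyp_nz'[OF assms] by auto
  have e1: "qpoch (q*a) q (Suc m+2) = qpoch (q*a) q (m+2) * (1 - a*q^(m+3))"
  proof -
    have "Suc m + 2 = Suc (m+2)" by simp
    then have "qpoch (q*a) q (Suc m+2) = qpoch (q*a) q (m+2) * (1 - q*a*q^(m+2))" by (simp only: qpoch_Suc)
    moreover have "q*a*q^(m+2) = a*q^(m+3)" by (simp add: mult_ac power_add eval_nat_numeral)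
    ultimately show ?thesis by simp
  qed
  have e2: "qpoch (q*(k*w)) q (Suc m+3) = qpoch (q*(k*w)) q (m+3) * (1 - k*w*q^(m+4))"
  proof -
    have "Suc m + 3 = Suc (m+3)" by simp
    then have "qpoch (q*(k*w)) q (Suc m+3) = qpoch (q*(k*w)) q (m+3) * (1 - q*(k*w)*q^(m+3))" by (simp only: qpoch_Suc)
    moreover have "q*(k*w)*q^(m+3) = k*w*q^(m+4)" by (simp add: mult_ac power_add eval_nat_numeral)
    ultimately show ?thesis by simp
  qed
  have e3: "qpoch b q (Suc (Suc m)) = qpoch b q (Suc m) * (1 - b*q^Suc m)"
    by (rule qpoch_Suc)
  have e4: "(q*a)^Suc (Suc m) = (q*a)^Suc m * (q*a)" by simp
  have e5: "(\<Prod>j<Suc m. w - q^j) = (\<Prod>j<m. w - q^j) * (w - q^m)" by simp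
  show ?thesis
    unfolding Cm_def e1 e2 e3 e4 e5
    using n1 n2 by (simp add: field_simps)
qed

definition Wt :: "complex \<Rightarrow> complex \<Rightarrow> complex \<Rightarrow> complex \<Rightarrow> nat \<Rightarrow> complex" where
"Wt q a k w m = (w - q^m) * (1 - a*q^(m+2)) * (1 - k*w*q^(m+2)) * (1 - k*w*q^(m+3)) * (1 - k*q^(2*m+2))
   / ((1 - k*q^(m+1)) * (1 - q^(m+1)))"

definition Tt :: "complex \<Rightarrow> complex \<Rightarrow> complex \<Rightarrow> complex \<Rightarrow> complex \<Rightarrow> nat \<Rightarrow> complex" where
"Tt q b a k w m = Cm q b a k w m * Wt q a k w m"

definition Wb :: "complex \<Rightarrow> complex \<Rightarrow> complex \<Rightarrow> complex \<Rightarrow> nat \<Rightarrow> complex" where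
"Wb q a k w m = (q*w - 1) * q^m * q^(m+1) * (1-q*a) * (1-k*w*q) * (1-k*w*q^2) * (1 - k*q^(2*m+3))
   / ((1 - k*q^(m+2)) * (1 - q^(m+1)))"

lemma Hyp_shift:
  assumes "Hyp q a k w" shows "Hyp q (a*q) (k*q) (w*q)"
proof -
  have "norm (q*(a*q)*(w*q)) = norm (q*a*w) * (norm q * norm q)" by (simp add: norm_mult)
  also have "\<dots> \<le> norm (q*a*w)" using assms unfolding Hyp_def
    by (intro mult_left_le) (auto simp: mult_le_one less_imp_le)
  finally have 1: "norm (q*(a*q)*(w*q)) < 1" using assms unfolding Hyp_def by auto
  have 2: "1 - k*q*q^Suc e \<noteq> 0" for e using Hyp_nz(3)[OF assms, of "Suc e"] by (simp add: mult_ac)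
  have 3: "1 - a*q*q^Suc e \<noteq> 0" for e using Hyp_nz(4)[OF assms, of "Suc e"] by (simp add: mult_ac)
  have 4: "1 - k*q*(w*q)*q^Suc e \<noteq> 0" for e using Hyp_nz(5)[OF assms, of "Suc (Suc e)"] by (simp add: mult_ac)
  show ?thesis using 1 2 3 4 assms unfolding Hyp_def by blast
qed

lemma prod_wq:
  fixes w q :: complex
  shows "(\<Prod>j<m. w*q - q^j) * (w*q - q^m) = (q*w - 1) * q^m * (\<Prod>j<m. w - q^j)"
proof (induction m)
  case 0 then show ?case by (simp add: mult_ac)
next
  case (Suc m)
  have "(\<Prod>j<Suc m. w*q - q^j) * (w*q - q^Suc m) = ((\<Prod>j<m. w*q - q^j) * (w*q - q^m)) * (w*q - q^Suc m)"
    by simp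
  also have "\<dots> = (q*w - 1) * q^m * (\<Prod>j<m. w - q^j) * (q * (w - q^m))"
  proof -
    have "w*q - q^Suc m = q * (w - q^m)" by (simp add: algebra_simps)
    then show ?thesis by (simp only: Suc.IH)
  qed
  also have "\<dots> = (q*w - 1) * q^Suc m * (\<Prod>j<Suc m. w - q^j)" by simp
  finally show ?case .
qed



lemma shift_alg:
 fixes Bz Ap Pw Pw' XA XK XA' XK' P q a k w :: complex
 assumes h1: "Pw' * (w*q - P) = (q*w - 1) * P * Pw"
 and h2: "XA' * (1 - q*a) = XA * (1 - a*q^3*P)"
 and h3: "XK' * ((1 - q*(k*w)) * (1 - q*(k*w)*q)) = XK * (1 - k*w*q^4*P) * (1 - k*w*q^5*P)"
 and nz: "XA \<noteq> 0" "XK \<noteq> 0" "XA' \<noteq> 0" "XK' \<noteq> 0"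
   "1 - k*q^2*P \<noteq> 0" "1 - q*P \<noteq> 0"
 shows "Bz * (Ap * (q*P)) * (Pw' * (w*q - P)) * ((1 - a*q^3*P) * (1 - k*w*q^4*P) * (1 - k*w*q^5*P) * (1 - k*q^3*P^2)) / (XA' * XK' * ((1 - k*q^2*P) * (1 - q*P)))
   = Bz * Ap * Pw / (XA * XK) * ((q*w - 1) * P * (q*P) * (1-q*a) * (1-k*w*q) * (1-k*w*q^2) * (1 - k*q^3*P^2) / ((1 - k*q^2*P) * (1 - q*P)))"
proof -
  have d1: "XA' * XK' * ((1 - k*q^2*P) * (1 - q*P)) \<noteq> 0" using nz by simp
  have d2: "XA * XK * ((1 - k*q^2*P) * (1 - q*P)) \<noteq> 0" using nz by simp
  show ?thesis
    unfolding h1 times_divide_times_eq frac_eq_eq[OF d1 d2]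
    using h2 h3 by algebra
qed

lemma Tt_shift:
  assumes H: "Hyp q a k w"
  shows "Tt q b (a*q) (k*q) (w*q) m = Cm q b a k w m * Wb q a k w m"
proof -
  have H': "Hyp q (a*q) (k*q) (w*q)" by (rule Hyp_shift[OF H])
  have F2: "qpoch (q*(a*q)) q (m+2) * (1 - q*a) = qpoch (q*a) q (m+2) * (1 - a*q^(m+3))"
  proof -
    have "qpoch (q*(a*q)) q (m+2) * (1 - q*a) = qpoch (q*a) q (Suc (m+2))"
      using qpoch_shift[of "q*a" q "m+2"] by (simp add: mult_ac)
    also have "\<dots> = qpoch (q*a) q (m+2) * (1 - a*q^(m+3))"
      by (simp only: qpoch_Suc) (simp add: mult_ac power_add eval_nat_numeral)
    finally show ?thesis .
  qed
  have F3: "qpoch (q*(k*q*(w*q))) q (m+3) * ((1 - q*(k*w)) * (1 - q*(k*w)*q))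
      = qpoch (q*(k*w)) q (m+3) * (1-k*w*q^(m+4)) * (1-k*w*q^(m+5))"
  proof -
    have "qpoch (q*(k*q*(w*q))) q (m+3) * ((1 - q*(k*w)) * (1 - q*(k*w)*q))
       = (qpoch ((q*(k*w))*q*q) q (m+3) * (1 - q*(k*w)*q)) * (1 - q*(k*w))"
      by (simp add: mult_ac)
    also have "\<dots> = qpoch ((q*(k*w))*q) q (Suc (m+3)) * (1 - q*(k*w))"
      by (simp only: qpoch_shift)
    also have "\<dots> = qpoch (q*(k*w)) q (Suc (Suc (m+3)))"
      by (simp only: qpoch_shift)
    also have "\<dots> = qpoch (q*(k*w)) q (m+3) * (1-k*w*q^(m+4)) * (1-k*w*q^(m+5))"
      by (simp only: qpoch_Suc) (simp add: mult_ac power_add eval_nat_numeral)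
    finally show ?thesis .
  qed
  have nz: "qpoch (q*a) q (m+2) \<noteq> 0" "qpoch (q*(k*w)) q (m+3) \<noteq> 0"
     "qpoch (q*(a*q)) q (m+2) \<noteq> 0" "qpoch (q*(k*q*(w*q))) q (m+3) \<noteq> 0"
    using Hyp_nz[OF H] Hyp_nz[OF H'] by auto
  have nz2: "1 - q*a \<noteq> 0" "1 - q*(k*w) \<noteq> 0" "1 - q*(k*w)*q \<noteq> 0"
     "1 - k*q^(m+2) \<noteq> 0" "1 - q^(m+1) \<noteq> 0" "1 - k*q*q^(m+1) \<noteq> 0"
     "1 - a*q^(m+3) \<noteq> 0" "1-k*w*q^(m+4) \<noteq> 0" "1-k*w*q^(m+5) \<noteq> 0"
    using Hyp_nz'[OF H, of 1] Hyp_nz'[OF H, of 2] Hyp_nz'[OF H, of "m+2"] Hyp_nz'[OF H, of "m+1"]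
      Hyp_nz'[OF H, of "m+3"] Hyp_nz'[OF H, of "m+4"] Hyp_nz'[OF H, of "m+5"]
    by (auto simp: mult_ac power2_eq_square)
  have F2': "qpoch (q*(a*q)) q (m+2) = qpoch (q*a) q (m+2) * (1 - a*q^(m+3)) / (1 - q*a)"
    using nonzero_eq_divide_eq[OF nz2(1), THEN iffD2, OF F2] .
  have F3': "qpoch (q*(k*q*(w*q))) q (m+3) = qpoch (q*(k*w)) q (m+3) * (1-k*w*q^(m+4)) * (1-k*w*q^(m+5))
      / ((1 - q*(k*w)) * (1 - q*(k*w)*q))"
  proof -
    have "(1 - q*(k*w)) * (1 - q*(k*w)*q) \<noteq> 0" using nz2 by simp
    from nonzero_eq_divide_eq[OF this, THEN iffD2, OF F3] show ?thesis .
  qed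
  have F2'': "qpoch (q*(a*q)) q (m+2) * (1 - q*a) = qpoch (q*a) q (m+2) * (1 - a*q^3*q^m)"
    using F2 by (simp add: power_add mult_ac)
  have F3'': "qpoch (q*(k*q*(w*q))) q (m+3) * ((1 - q*(k*w)) * (1 - q*(k*w)*q))
      = qpoch (q*(k*w)) q (m+3) * (1-k*w*q^4*q^m) * (1-k*w*q^5*q^m)"
    using F3 by (simp add: power_add mult_ac)
  have nz3: "1 - k*q^2*q^m \<noteq> 0" "1 - q*q^m \<noteq> 0"
    using nz2 by (simp_all add: power_add mult_ac power2_eq_square)
  note inst = shift_alg[where Pw'="\<Prod>j<m. w*q - q^j" and P="q^m" and Pw="\<Prod>j<m. w - q^j"
      and XA'="qpoch (q*(a*q)) q (m+2)" and XA="qpoch (q*a) q (m+2)"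
      and XK'="qpoch (q*(k*q*(w*q))) q (m+3)" and XK="qpoch (q*(k*w)) q (m+3)"
      and Bz="qpoch b q (Suc m)" and Ap="(q*a)^Suc m", OF prod_wq F2'' F3'' nz(1,2,3,4) nz3]
  have L: "Tt q b (a*q) (k*q) (w*q) m = qpoch b q (Suc m) * ((q*a)^Suc m * (q*q^m)) * ((\<Prod>j<m. w*q - q^j) * (w*q - q^m)) * ((1 - a*q^3*q^m) * (1 - k*w*q^4*q^m) * (1 - k*w*q^5*q^m) * (1 - k*q^3*(q^m)^2)) / (qpoch (q*(a*q)) q (m+2) * qpoch (q*(k*q*(w*q))) q (m+3) * ((1 - k*q^2*q^m) * (1 - q*q^m)))"
    unfolding Tt_def Cm_def Wt_def by (simp add: power_add power_mult power_mult_distrib eval_nat_numeral mult_ac)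
  have R: "Cm q b a k w m * Wb q a k w m = qpoch b q (Suc m) * (q*a)^Suc m * (\<Prod>j<m. w - q^j) / (qpoch (q*a) q (m+2) * qpoch (q*(k*w)) q (m+3)) * ((q*w - 1) * q^m * (q*q^m) * (1-q*a) * (1-k*w*q) * (1-k*w*q^2) * (1 - k*q^3*(q^m)^2) / ((1 - k*q^2*q^m) * (1 - q*q^m)))"
    unfolding Cm_def Wb_def by (simp add: power_add power_mult power_mult_distrib eval_nat_numeral mult_ac)
  show ?thesis using L R inst by simp
qed



definition Nf :: "complex \<Rightarrow> complex \<Rightarrow> complex \<Rightarrow> complex \<Rightarrow> complex \<Rightarrow> complex" where
"Nf q a k w P = (w*(1-q^2*a*w)
   + (-1+q*w-2*q^2*k*w^2-q^2*a*w^2-(q^2-q^3)*a*k*w^2+(q^3+q^4)*a*k*w^3+q^3*a^2*w^2)*P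
   + (q*k^2*w^2+(1+q)*a*k*w+(q-q^2)*a*k*w^2-q^2*a*k^2*w^2-2*q^2*a^2*k*w^2+q^3*a^2*k^2*w^3-q^4*a^2*k^2*w^4)*(q*P)^2
   - q*a*k^2*w^2*(1-q^2*a*w)*(q*P)^3)"

lemma corepoly:
  fixes q a k w P :: complex
  shows "(w-P)*(1-a*q^2*P)*(1-k*w*q^2*P)*(1-k*w*q^3*P)*(1-k*q^2*P^2)*(1-k*q^2*P)*((1-q*a*w)*(1-q^2*a*w))
   - (q*w-1)*P*(q*P)*(1-q*a)*(1-k*w*q)*(1-k*w*q^2)*(1-k*q^3*P^2)*(1-k*q*P)*((1-q*a*w)*(1-q^2*a*w))
   = Nf q a k w P*(1-a*q^2*P)*(1-k*w*q^3*P)*(1-q*P)*(1-k*q^2*P) - q*(a-k*q*P)*(w-P)*Nf q a k w (q*P)*(1-k*q*P)*(1-q*P)"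
  unfolding Nf_def by algebra

lemma core_alg:
  fixes q a k b w P T1 T2 U1 U2 :: complex
  assumes kb: "k = b*a"
  and t1: "T1 * ((1-k*q*P)*(1-q*P)) = (w-P)*(1-a*q^2*P)*(1-k*w*q^2*P)*(1-k*w*q^3*P)*(1-k*q^2*P^2)"
  and t2: "T2 * ((1-k*q^2*P)*(1-q*P)) = (q*w-1)*P*(q*P)*(1-q*a)*(1-k*w*q)*(1-k*w*q^2)*(1-k*q^3*P^2)"
  and u1: "U1 * (((1-q*a*w)*(1-q^2*a*w))*(1-k*q*P)) = Nf q a k w P*(1-a*q^2*P)*(1-k*w*q^3*P)"
  and u2: "U2 * (((1-q*a*w)*(1-q^2*a*w))*(1-k*q^2*P)) = (1-b*(q*P))*(q*a)*(w-P)*Nf q a k w (q*P)"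
  and nz: "(1-q*a*w)*(1-q^2*a*w) \<noteq> 0" "1-k*q*P \<noteq> 0" "1-q*P \<noteq> 0" "1-k*q^2*P \<noteq> 0"
  shows "T1 - T2 = U1 - U2"
proof -
  define D where "D = (1-q*a*w)*(1-q^2*a*w)"
  define X where "X = D*(1-k*q*P)*(1-q*P)*(1-k*q^2*P)"
  have X: "X \<noteq> 0" using nz unfolding X_def D_def by simp
  have e1: "(T1 - T2) * X = (w-P)*(1-a*q^2*P)*(1-k*w*q^2*P)*(1-k*w*q^3*P)*(1-k*q^2*P^2)*(1-k*q^2*P)*D
   - (q*w-1)*P*(q*P)*(1-q*a)*(1-k*w*q)*(1-k*w*q^2)*(1-k*q^3*P^2)*(1-k*q*P)*D"
  proof -
    have "(T1 - T2) * X = (T1 * ((1-k*q*P)*(1-q*P)))*(1-k*q^2*P)*D - (T2 * ((1-k*q^2*P)*(1-q*P)))*(1-k*q*P)*D"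
      unfolding X_def by (simp add: algebra_simps)
    then show ?thesis unfolding t1 t2 .
  qed
  have e2: "(U1 - U2) * X = Nf q a k w P*(1-a*q^2*P)*(1-k*w*q^3*P)*(1-q*P)*(1-k*q^2*P)
       - q*(a-k*q*P)*(w-P)*Nf q a k w (q*P)*(1-k*q*P)*(1-q*P)"
  proof -
    have "(U1 - U2) * X = (U1 * (D*(1-k*q*P)))*(1-q*P)*(1-k*q^2*P) - (U2 * (D*(1-k*q^2*P)))*(1-k*q*P)*(1-q*P)"
      unfolding X_def by (simp add: algebra_simps)
    also have "\<dots> = Nf q a k w P*(1-a*q^2*P)*(1-k*w*q^3*P)*(1-q*P)*(1-k*q^2*P)
       - (1-b*(q*P))*(q*a)*(w-P)*Nf q a k w (q*P)*(1-k*q*P)*(1-q*P)"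
      using u1 u2 unfolding D_def by simp
    also have "(1-b*(q*P))*(q*a) = q*(a-k*q*P)" unfolding kb by (simp add: algebra_simps)
    finally show ?thesis by (simp add: mult.assoc)
  qed
  have "(T1 - T2) * X = (U1 - U2) * X"
    unfolding e1 e2 D_def by (rule corepoly)
  then show ?thesis using X by simp
qed

definition Ut :: "complex \<Rightarrow> complex \<Rightarrow> complex \<Rightarrow> complex \<Rightarrow> complex \<Rightarrow> nat \<Rightarrow> complex" where
"Ut q b a k w m = Cm q b a k w m * (Nf q a k w (q^m) / ((1-q*a*w)*(1-q^2*a*w)))
    * (1 - a*q^(m+2)) * (1 - k*w*q^(m+3)) / (1 - k*q^(m+1))"

lemma Hyp_D:
  assumes "Hyp q a k w" shows "(1-q*a*w)*(1-q^2*a*w) \<noteq> 0"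
proof -
  have q: "norm q < 1" and h: "norm (q*a*w) < 1" using assms unfolding Hyp_def by auto
  have "norm (q^2*a*w) = norm q * norm (q*a*w)" by (simp add: norm_mult power2_eq_square)
  also have "\<dots> \<le> norm (q*a*w)" using q by (intro mult_left_le_one_le) auto
  also have "\<dots> < 1" using h .
  finally have "norm (q^2*a*w) < 1" .
  then have "1-q^2*a*w \<noteq> 0" by auto
  moreover have "1-q*a*w \<noteq> 0" using h by auto
  ultimately show ?thesis by simp
qed

lemma divmul: "(d::complex) \<noteq> 0 \<Longrightarrow> x = n/d \<Longrightarrow> x*d = n" by simp

lemma u2_alg: "(g1::complex) \<noteq> 0 \<Longrightarrow> g2 \<noteq> 0 \<Longrightarrow> D \<noteq> 0 \<Longrightarrow> d \<noteq> 0 \<Longrightarrow>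
   (F/(g1*g2)) * (N/D) * g1 * g2 / d * (D*d) = F*N"
  by (simp add: field_simps)

lemma u1_alg: "(D::complex) \<noteq> 0 \<Longrightarrow> d \<noteq> 0 \<Longrightarrow> (N/D) * x * y / d * (D*d) = N*x*y"
  by (simp add: field_simps)

lemma q2m: "(q::complex)^(2*m) = (q^m)^2" by (metis power_mult mult.commute)

lemma tele:
  assumes H: "Hyp q a k w" and kb: "k = b*a"
  shows "Tt q b a k w m - Tt q b (a*q) (k*q) (w*q) m = Ut q b a k w m - Ut q b a k w (Suc m)"
proof -
  define P where "P = q^m"
  define D where "D = (1-q*a*w)*(1-q^2*a*w)"
  have D: "D \<noteq> 0" using Hyp_D[OF H] unfolding D_def .
  have nz: "1 - k*q*P \<noteq> 0" "1 - q*P \<noteq> 0" "1 - k*q^2*P \<noteq> 0" "1 - a*q^3*P \<noteq> 0" "1 - k*w*q^4*P \<noteq> 0"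
    using Hyp_nz'[OF H, of "m+1"] Hyp_nz'[OF H, of "m+2"] Hyp_nz'[OF H, of "m+3"] Hyp_nz'[OF H, of "m+4"]
    unfolding P_def by (simp_all add: power_add mult_ac eval_nat_numeral)
  define T1 where "T1 = Wt q a k w m"
  define T2 where "T2 = Wb q a k w m"
  define U1 where "U1 = (Nf q a k w P / D) * (1 - a*q^2*P) * (1 - k*w*q^3*P) / (1 - k*q*P)"
  define U2 where "U2 = ((1 - b*(q*P))*(q*a)*(w - P)/((1-a*q^3*P)*(1-k*w*q^4*P)))
      * (Nf q a k w (q*P) / D) * (1-a*q^3*P) * (1-k*w*q^4*P) / (1-k*q^2*P)"
  have pp1: "a*q^(m+2) = a*q^2*P" "k*w*q^(m+2) = k*w*q^2*P" "k*w*q^(m+3) = k*w*q^3*P"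
      "k*q^(m+1) = k*q*P" "q^(m+1) = q*P" "k*q^(m+2) = k*q^2*P"
    unfolding P_def by (simp_all add: power_add mult_ac power2_eq_square power3_eq_cube)
  have pp2: "k*q^(2*m+2) = k*q^2*P^2" "k*q^(2*m+3) = k*q^3*P^2"
    unfolding P_def power_add q2m by (simp_all add: mult_ac)
  note pp = pp1 pp2
  have t1': "T1 = ((w-P)*(1-a*q^2*P)*(1-k*w*q^2*P)*(1-k*w*q^3*P)*(1-k*q^2*P^2)) / ((1-k*q*P)*(1-q*P))"
    unfolding T1_def Wt_def pp P_def[symmetric] by (simp only: mult.assoc)
  have t1: "T1 * ((1-k*q*P)*(1-q*P)) = (w-P)*(1-a*q^2*P)*(1-k*w*q^2*P)*(1-k*w*q^3*P)*(1-k*q^2*P^2)"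
    by (rule divmul[OF _ t1']) (use nz in simp)
  have t2': "T2 = ((q*w-1)*P*(q*P)*(1-q*a)*(1-k*w*q)*(1-k*w*q^2)*(1-k*q^3*P^2)) / ((1-k*q^2*P)*(1-q*P))"
    unfolding T2_def Wb_def pp P_def[symmetric] by (simp only: mult.assoc)
  have t2: "T2 * ((1-k*q^2*P)*(1-q*P)) = (q*w-1)*P*(q*P)*(1-q*a)*(1-k*w*q)*(1-k*w*q^2)*(1-k*q^3*P^2)"
    by (rule divmul[OF _ t2']) (use nz in simp)
  have u1: "U1 * (D*(1-k*q*P)) = Nf q a k w P*(1-a*q^2*P)*(1-k*w*q^3*P)"
    unfolding U1_def by (rule u1_alg) (use nz D in auto)
  have u2: "U2 * (D*(1-k*q^2*P)) = (1-b*(q*P))*(q*a)*(w-P)*Nf q a k w (q*P)"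
    unfolding U2_def by (rule u2_alg) (use nz D in auto)
  have core: "T1 - T2 = U1 - U2"
    by (rule core_alg[OF kb t1 t2 u1[unfolded D_def] u2[unfolded D_def] D[unfolded D_def] nz(1,2,3)])
  have a1: "Tt q b a k w m = Cm q b a k w m * T1" unfolding Tt_def T1_def ..
  have a2: "Tt q b (a*q) (k*q) (w*q) m = Cm q b a k w m * T2" unfolding T2_def by (rule Tt_shift[OF H])
  have p: "a*q^(m+2) = a*q^2*P" "k*w*q^(m+3) = k*w*q^3*P" "k*q^(m+1) = k*q*P"
     "q^Suc m = q*P" "a*q^(Suc m+2) = a*q^3*P" "k*w*q^(Suc m+3) = k*w*q^4*P" "k*q^(Suc m+1) = k*q^2*P"
     "a*q^(m+3) = a*q^3*P" "k*w*q^(m+4) = k*w*q^4*P" "b*q^Suc m = b*(q*P)"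
    unfolding P_def by (simp_all add: power_add mult_ac eval_nat_numeral)
  have a3: "Ut q b a k w m = Cm q b a k w m * U1"
    unfolding Ut_def U1_def p P_def[symmetric] D_def[symmetric]
    by (simp only: times_divide_eq_right times_divide_eq_left divide_divide_eq_left mult.assoc)
  have a4: "Ut q b a k w (Suc m) = Cm q b a k w m * U2"
    unfolding Ut_def U2_def Cm_Suc[OF H] p P_def[symmetric] D_def[symmetric]
    by (simp only: times_divide_eq_right times_divide_eq_left divide_divide_eq_left mult.assoc)
  show ?thesis unfolding a1 a2 a3 a4 by (simp only: right_diff_distrib[symmetric] core)
qed



definition rho :: "complex \<Rightarrow> complex \<Rightarrow> complex \<Rightarrow> complex \<Rightarrow> complex" where
"rho q a k w = k*q/(1-k*q) + a*w*q/(1-a*w*q) + a*w*q^2/(1-a*w*q^2) - a*q/(1-a*q) - k*w*q/(1-k*w*q) - k*w*q^2/(1-k*w*q^2)"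

lemma bnd_alg:
  fixes q a k w X r1 r2 r3 r4 r5 r6 :: complex
  assumes x: "X * ((1-q*a)*(1-q*(k*w))*(1-q*(k*w)*q)*((1-q*a*w)*(1-q^2*a*w))*(1-k*q)) = q*(a-k)*Nf q a k w 1"
  and h1: "r1*(1-k*q) = k*q" and h2: "r2*(1-a*w*q) = a*w*q" and h3: "r3*(1-a*w*q^2) = a*w*q^2"
  and h4: "r4*(1-a*q) = a*q" and h5: "r5*(1-k*w*q) = k*w*q" and h6: "r6*(1-k*w*q^2) = k*w*q^2"
  and nz: "(1-q*a)*(1-q*(k*w))*(1-q*(k*w)*q)*((1-q*a*w)*(1-q^2*a*w))*(1-k*q) \<noteq> 0"
  shows "X = r1 + r2 + r3 - r4 - r5 - r6"
proof -
  define Den where "Den = (1-q*a)*(1-q*(k*w))*(1-q*(k*w)*q)*((1-q*a*w)*(1-q^2*a*w))*(1-k*q)"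
  have "(r1 + r2 + r3 - r4 - r5 - r6) * Den = q*(a-k)*Nf q a k w 1"
    unfolding Den_def Nf_def using h1 h2 h3 h4 h5 h6 by algebra
  then have "X * Den = (r1 + r2 + r3 - r4 - r5 - r6) * Den" using x unfolding Den_def by simp
  then show ?thesis using nz unfolding Den_def by simp
qed

lemma qpoch0: "qpoch x q 0 = 1" by (simp add: qpoch_def)
lemma qpoch1: "qpoch x q 1 = 1 - x" by (simp add: qpoch_def)
lemma qpoch2: "qpoch x q 2 = (1 - x)*(1 - x*q)" by (simp add: qpoch_def numeral_2_eq_2)
lemma qpoch3: "qpoch x q 3 = (1 - x)*(1 - x*q)*(1 - x*q^2)"
  by (simp add: qpoch_def numeral_3_eq_3 power2_eq_square)

lemma Ut0:
  assumes H: "Hyp q a k w" and kb: "k = b*a"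
  shows "Ut q b a k w 0 = rho q a k w"
proof -
  define X where "X = Ut q b a k w 0"
  have nz: "1 - q*a \<noteq> 0" "1 - q*a*q \<noteq> 0" "1 - q*(k*w) \<noteq> 0" "1 - q*(k*w)*q \<noteq> 0" "1 - q*(k*w)*q^2 \<noteq> 0"
     "1 - k*q \<noteq> 0" "1 - a*w*q \<noteq> 0" "1 - a*w*q^2 \<noteq> 0"
     "1 - a*q \<noteq> 0" "1 - k*w*q \<noteq> 0" "1 - k*w*q^2 \<noteq> 0"
    using Hyp_nz'[OF H, of 1] Hyp_nz'[OF H, of 2] Hyp_nz'[OF H, of 3] Hyp_D[OF H]
    by (auto simp: mult_ac power2_eq_square eval_nat_numeral)
  have D: "(1-q*a*w)*(1-q^2*a*w) \<noteq> 0" by (rule Hyp_D[OF H])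
  have den: "(1-q*a)*(1-q*a*q)*((1-q*(k*w))*(1-q*(k*w)*q)*(1-q*(k*w)*q^2))*((1-q*a*w)*(1-q^2*a*w))*(1-k*q) \<noteq> 0"
    using nz D by simp
  have X1: "X = ((1-b)*(q*a)*Nf q a k w 1*(1-a*q^2)*(1-k*w*q^3)) /
     ((1-q*a)*(1-q*a*q)*((1-q*(k*w))*(1-q*(k*w)*q)*(1-q*(k*w)*q^2))*((1-q*a*w)*(1-q^2*a*w))*(1-k*q))"
    unfolding X_def Ut_def Cm_def by (simp add: qpoch_Suc qpoch0 qpoch3 mult.assoc power2_eq_square)
  have X2: "X * ((1-q*a)*(1-q*a*q)*((1-q*(k*w))*(1-q*(k*w)*q)*(1-q*(k*w)*q^2))*((1-q*a*w)*(1-q^2*a*w))*(1-k*q))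
     = (1-b)*(q*a)*Nf q a k w 1*(1-a*q^2)*(1-k*w*q^3)"
    by (rule divmul[OF den X1])
  have X3: "X * ((1-q*a)*(1-q*(k*w))*(1-q*(k*w)*q)*((1-q*a*w)*(1-q^2*a*w))*(1-k*q)) = q*(a-k)*Nf q a k w 1"
    using X2 nz(2,5) unfolding kb by algebra
  have r1: "(k*q/(1-k*q))*(1-k*q) = k*q" using nz by simp
  have r2: "(a*w*q/(1-a*w*q))*(1-a*w*q) = a*w*q" using nz by simp
  have r3: "(a*w*q^2/(1-a*w*q^2))*(1-a*w*q^2) = a*w*q^2" using nz by simp
  have r4: "(a*q/(1-a*q))*(1-a*q) = a*q" using nz by simp
  have r5: "(k*w*q/(1-k*w*q))*(1-k*w*q) = k*w*q" using nz by simp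
  have r6: "(k*w*q^2/(1-k*w*q^2))*(1-k*w*q^2) = k*w*q^2" using nz by simp
  have "X = rho q a k w" unfolding rho_def
    by (rule bnd_alg[OF X3 r1 r2 r3 r4 r5 r6]) (use nz D in simp)
  then show ?thesis unfolding X_def .
qed



lemma qlim0: "norm (q::complex) < 1 \<Longrightarrow> (\<lambda>n. q^n) \<longlonglongrightarrow> 0"
  by (rule LIMSEQ_power_zero)

lemma qlim: "norm (q::complex) < 1 \<Longrightarrow> (\<lambda>n. q^(n+j)) \<longlonglongrightarrow> 0"
proof -
  assume q: "norm q < 1"
  have "(\<lambda>n. q^n * q^j) \<longlonglongrightarrow> 0 * q^j" by (intro tendsto_intros qlim0 q)
  then show ?thesis by (simp add: power_add)
qed

lemma qlimS: "norm (q::complex) < 1 \<Longrightarrow> (\<lambda>n. q^Suc n) \<longlonglongrightarrow> 0"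
  using qlim[of q 1] by simp

lemma qlim2: "norm (q::complex) < 1 \<Longrightarrow> (\<lambda>n. q^(2*n+j)) \<longlonglongrightarrow> 0"
proof -
  assume q: "norm q < 1"
  have "(\<lambda>n. q^n * q^(n+j)) \<longlonglongrightarrow> 0 * 0" by (intro tendsto_intros qlim0 qlim q)
  then show ?thesis by (simp add: power_add mult_2 mult.assoc)
qed

lemma Cm_summable_norm:
  assumes H: "Hyp q a k w"
  shows "summable (\<lambda>m. norm (Cm q b a k w m))"
proof -
  have q: "norm q < 1" using H unfolding Hyp_def by auto
  have qaw: "norm (q*a*w) < 1" using H unfolding Hyp_def by auto
  define Fr where "Fr n = (1 - b*q^(Suc n)) * (q*a) * (w - q^n) / ((1 - a*q^(n+3)) * (1 - k*w*q^(n+4)))" for n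
  have rec: "Cm q b a k w (Suc n) = Cm q b a k w n * Fr n" for n
    unfolding Fr_def by (rule Cm_Suc[OF H])
  have "Fr \<longlonglongrightarrow> (1 - b*0) * (q*a) * (w - 0) / ((1 - a*0) * (1 - k*w*0))"
    unfolding Fr_def by (intro tendsto_intros qlim qlimS qlim0 q) simp
  then have "Fr \<longlonglongrightarrow> q*a*w" by (simp add: mult.assoc)
  then have "(\<lambda>n. norm (Fr n)) \<longlonglongrightarrow> norm (q*a*w)" by (rule tendsto_norm)
  moreover have "norm (q*a*w) < (1 + norm (q*a*w))/2" using qaw by simp
  ultimately have "eventually (\<lambda>n. norm (Fr n) < (1 + norm (q*a*w))/2) sequentially"
    by (rule order_tendstoD(2))
  then obtain N where N: "\<And>n. n \<ge> N \<Longrightarrow> norm (Fr n) < (1 + norm (q*a*w))/2"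
    by (auto simp: eventually_sequentially)
  show ?thesis
  proof (rule summable_ratio_test[where c="(1 + norm (q*a*w))/2" and N=N])
    show "(1 + norm (q*a*w))/2 < 1" using qaw by simp
    fix n assume "n \<ge> N"
    then have "norm (Fr n) \<le> (1 + norm (q*a*w))/2" using N by (simp add: less_imp_le)
    then have "norm (Cm q b a k w n) * norm (Fr n) \<le> norm (Cm q b a k w n) * ((1 + norm (q*a*w))/2)"
      by (intro mult_left_mono) auto
    then show "norm (norm (Cm q b a k w (Suc n))) \<le> (1 + norm (q*a*w))/2 * norm (norm (Cm q b a k w n))"
      by (simp add: rec norm_mult mult.commute)
  qed
qed

lemma Cm_lim:
  assumes H: "Hyp q a k w"
  shows "Cm q b a k w \<longlonglongrightarrow> 0"
  using summable_LIMSEQ_zero[OF Cm_summable_norm[OF H]] tendsto_norm_zero_cancel by blast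

lemma Wt_lim:
  assumes H: "Hyp q a k w"
  shows "Wt q a k w \<longlonglongrightarrow> w"
proof -
  have q: "norm q < 1" using H unfolding Hyp_def by auto
  have "Wt q a k w \<longlonglongrightarrow> (w - 0) * (1 - a*0) * (1 - k*w*0) * (1 - k*w*0) * (1 - k*0) / ((1 - k*0) * (1 - 0))"
    unfolding Wt_def[abs_def] by (intro tendsto_intros qlim qlim0 qlim2 q) simp
  then show ?thesis by simp
qed

lemma Tt_summable:
  assumes H: "Hyp q a k w"
  shows "summable (Tt q b a k w)"
proof -
  have "Bseq (Wt q a k w)" using Wt_lim[OF H] by (rule convergent_imp_Bseq[OF convergentI])
  then obtain B where B: "B > 0" "\<And>m. norm (Wt q a k w m) \<le> B" by (auto simp: Bseq_def)
  have "summable (\<lambda>m. B * norm (Cm q b a k w m))"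
    by (intro summable_mult Cm_summable_norm[OF H])
  then show ?thesis
  proof (rule summable_comparison_test'[where N=0])
    fix m
    have "norm (Tt q b a k w m) = norm (Cm q b a k w m) * norm (Wt q a k w m)"
      by (simp add: Tt_def norm_mult)
    also have "\<dots> \<le> norm (Cm q b a k w m) * B" using B by (intro mult_left_mono) auto
    finally show "norm (Tt q b a k w m) \<le> B * norm (Cm q b a k w m)" by (simp add: mult.commute)
  qed
qed

lemma Ut_lim:
  assumes H: "Hyp q a k w"
  shows "Ut q b a k w \<longlonglongrightarrow> 0"
proof -
  have q: "norm q < 1" using H unfolding Hyp_def by auto
  have D: "(1-q*a*w)*(1-q^2*a*w) \<noteq> 0" by (rule Hyp_D[OF H])
  have N: "(\<lambda>m. Nf q a k w (q^m)) \<longlonglongrightarrow> Nf q a k w 0"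
  proof -
    have "(\<lambda>m. Nf q a k w (q^m)) \<longlonglongrightarrow> (w*(1-q^2*a*w)
   + (-1+q*w-2*q^2*k*w^2-q^2*a*w^2-(q^2-q^3)*a*k*w^2+(q^3+q^4)*a*k*w^3+q^3*a^2*w^2)*0
   + (q*k^2*w^2+(1+q)*a*k*w+(q-q^2)*a*k*w^2-q^2*a*k^2*w^2-2*q^2*a^2*k*w^2+q^3*a^2*k^2*w^3-q^4*a^2*k^2*w^4)*(q*0)^2
   - q*a*k^2*w^2*(1-q^2*a*w)*(q*0)^3)"
      unfolding Nf_def by (intro tendsto_intros qlim0 q)
    then show ?thesis by (simp add: Nf_def)
  qed
  have "Ut q b a k w \<longlonglongrightarrow> 0 * (Nf q a k w 0 / ((1-q*a*w)*(1-q^2*a*w))) * (1 - a*0) * (1 - k*w*0) / (1 - k*0)"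
    unfolding Ut_def[abs_def] by (intro tendsto_intros Cm_lim[OF H] N qlim q D) simp
  then show ?thesis by simp
qed

lemma L_shift:
  assumes H: "Hyp q a k w" and kb: "k = b*a"
  shows "suminf (Tt q b a k w) - suminf (Tt q b (a*q) (k*q) (w*q)) = rho q a k w"
proof -
  have H': "Hyp q (a*q) (k*q) (w*q)" by (rule Hyp_shift[OF H])
  have "(\<lambda>m. Ut q b a k w m - Ut q b a k w (Suc m)) sums (Ut q b a k w 0 - 0)"
    by (rule telescope_sums'[OF Ut_lim[OF H]])
  then have "(\<lambda>m. Tt q b a k w m - Tt q b (a*q) (k*q) (w*q) m) sums (rho q a k w)"
    by (simp add: tele[OF H kb] Ut0[OF H kb])
  moreover have "(\<lambda>m. Tt q b a k w m - Tt q b (a*q) (k*q) (w*q) m) sums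
     (suminf (Tt q b a k w) - suminf (Tt q b (a*q) (k*q) (w*q)))"
    by (intro sums_diff summable_sums Tt_summable H H')
  ultimately show ?thesis using sums_unique2 by blast
qed



definition gt :: "complex \<Rightarrow> complex \<Rightarrow> nat \<Rightarrow> complex" where
"gt q x m = x*q^Suc m/(1 - x*q^Suc m)"

lemma nb1: "norm (q::complex) \<le> 1 \<Longrightarrow> norm (x*q^j) \<le> norm x"
proof -
  assume q: "norm q \<le> 1"
  have "norm q ^ j \<le> 1" by (rule power_le_one) (use q in auto)
  then have "norm x * norm q ^ j \<le> norm x * 1" by (intro mult_left_mono) auto
  then show ?thesis by (simp add: norm_mult norm_power)
qed

lemma nb2: "norm (x::complex) \<le> 1/2 \<Longrightarrow> norm (1 - x) \<ge> 1/2"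
proof -
  assume "norm x \<le> 1/2"
  moreover have "norm (1::complex) \<le> norm (1 - x) + norm x" using norm_triangle_ineq[of "1-x" x] by simp
  ultimately show ?thesis by simp
qed

lemma nb3: "norm (1 - (x::complex)) \<le> 1 + norm x"
  using norm_triangle_ineq4[of 1 x] by simp

lemma g_bound:
  assumes q: "norm q < 1" and x: "norm x \<le> 1/2"
  shows "norm (gt q x m) \<le> 2 * norm x * norm q ^ Suc m"
proof -
  have a: "norm (x*q^Suc m) \<le> norm x" by (rule nb1) (use q in simp)
  then have "norm (x*q^Suc m) \<le> 1/2" using x by linarith
  then have b: "norm (1 - x*q^Suc m) \<ge> 1/2" by (rule nb2)
  have "norm (gt q x m) = norm (x*q^Suc m) / norm (1 - x*q^Suc m)" by (simp add: gt_def norm_divide)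
  also have "\<dots> \<le> norm (x*q^Suc m) / (1/2)" using b by (intro divide_left_mono) auto
  also have "\<dots> = 2 * norm x * norm q ^ Suc m" by (simp add: norm_mult norm_power)
  finally show ?thesis .
qed

lemma geo_summable: "norm (q::complex) < 1 \<Longrightarrow> summable (\<lambda>m. c * norm q ^ Suc m)"
  by (intro summable_mult summable_Suc_iff[THEN iffD2] summable_geometric) simp

lemma g_summable:
  assumes q: "norm q < 1"
  shows "summable (gt q x)"
proof -
  have "(\<lambda>m. x*q^Suc m) \<longlonglongrightarrow> x*0" by (intro tendsto_intros qlimS q)
  then have "(\<lambda>m. norm (x*q^Suc m)) \<longlonglongrightarrow> norm (x*0)" by (rule tendsto_norm)
  moreover have "norm (x*0) < 1/2" by simp
  ultimately have "eventually (\<lambda>m. norm (x*q^Suc m) < 1/2) sequentially"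
    by (rule order_tendstoD(2))
  then obtain N where N: "\<And>m. m \<ge> N \<Longrightarrow> norm (x*q^Suc m) < 1/2" by (auto simp: eventually_sequentially)
  show ?thesis
  proof (rule summable_comparison_test'[OF geo_summable[OF q, of "2*norm x"]])
    fix m assume "m \<ge> N"
    then have "norm (x*q^Suc m) \<le> 1/2" using N by (simp add: less_imp_le)
    then have b: "norm (1 - x*q^Suc m) \<ge> 1/2" by (rule nb2)
    have "norm (gt q x m) = norm (x*q^Suc m) / norm (1 - x*q^Suc m)" by (simp add: gt_def norm_divide)
    also have "\<dots> \<le> norm (x*q^Suc m) / (1/2)" using b by (intro divide_left_mono) auto
    also have "\<dots> = 2 * norm x * norm q ^ Suc m" by (simp add: norm_mult norm_power)
    finally show "norm (gt q x m) \<le> 2 * norm x * norm q ^ Suc m" .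
  qed
qed

lemma g_shift1: "gt q (x*q) m = gt q x (Suc m)"
  unfolding gt_def by (simp add: mult_ac)

lemma g_shift2: "gt q (x*q*q) m = gt q x (Suc (Suc m))"
  unfolding gt_def by (simp add: mult_ac)

lemma g_sum_shift1:
  assumes q: "norm q < 1"
  shows "suminf (gt q (x*q)) = suminf (gt q x) - gt q x 0"
  unfolding g_shift1 by (rule suminf_split_head[OF g_summable[OF q]])

lemma g_sum_shift2:
  assumes q: "norm q < 1"
  shows "suminf (gt q (x*q*q)) = suminf (gt q x) - gt q x 0 - gt q x 1"
proof -
  have "suminf (gt q (x*q*q)) = suminf (gt q (x*q)) - gt q (x*q) 0"
    by (rule g_sum_shift1[OF q])
  also have "\<dots> = suminf (gt q x) - gt q x 0 - gt q x 1"
    unfolding g_sum_shift1[OF q] g_shift1 by simp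
  finally show ?thesis .
qed

definition Rs :: "complex \<Rightarrow> complex \<Rightarrow> complex \<Rightarrow> complex \<Rightarrow> complex" where
"Rs q a k w = suminf (gt q k) + suminf (gt q (a*w)) - suminf (gt q a) - suminf (gt q (k*w))"

lemma R_shift:
  assumes q: "norm q < 1"
  shows "Rs q a k w - Rs q (a*q) (k*q) (w*q) = rho q a k w"
proof -
  have e1: "a*q*(w*q) = a*w*q*q" "k*q*(w*q) = k*w*q*q" by (simp_all add: mult_ac)
  have "Rs q a k w - Rs q (a*q) (k*q) (w*q) = gt q k 0 + gt q (a*w) 0 + gt q (a*w) 1 - gt q a 0
      - gt q (k*w) 0 - gt q (k*w) 1"
    unfolding Rs_def e1 g_sum_shift2[OF q] unfolding g_sum_shift1[OF q] by (simp add: algebra_simps)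
  also have "\<dots> = rho q a k w"
    unfolding rho_def gt_def by (simp add: mult_ac power2_eq_square)
  finally show ?thesis .
qed

lemma g_lim:
  assumes q: "norm q < 1" and x: "X \<longlonglongrightarrow> 0"
  shows "(\<lambda>N. suminf (gt q (X N))) \<longlonglongrightarrow> 0"
proof (rule Lim_null_comparison)
  have "(\<lambda>N. norm (X N)) \<longlonglongrightarrow> norm (0::complex)" by (rule tendsto_norm[OF x])
  moreover have "norm (0::complex) < 1/2" by simp
  ultimately have "eventually (\<lambda>N. norm (X N) < 1/2) sequentially"
    by (rule order_tendstoD(2))
  then show "eventually (\<lambda>N. norm (suminf (gt q (X N))) \<le> 2 * norm q / (1 - norm q) * norm (X N)) sequentially"
  proof (rule eventually_mono)
    fix N assume XN: "norm (X N) < 1/2"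
    have s: "summable (\<lambda>m. 2 * norm (X N) * norm q ^ Suc m)" by (rule geo_summable[OF q])
    have "norm (suminf (gt q (X N))) \<le> (\<Sum>m. 2 * norm (X N) * norm q ^ Suc m)"
      by (rule norm_suminf_le[OF g_bound[OF q] s]) (use XN in simp)
    also have "\<dots> = 2 * norm (X N) * (\<Sum>m. norm q ^ Suc m)"
      by (rule suminf_mult) (intro summable_Suc_iff[THEN iffD2] summable_geometric, simp add: q)
    also have "(\<Sum>m. norm q ^ Suc m) = norm q / (1 - norm q)"
    proof -
      have "(\<Sum>m. norm q ^ Suc m) = norm q * (\<Sum>m. norm q ^ m)"
        by (simp add: suminf_mult summable_geometric q)
      also have "\<dots> = norm q / (1 - norm q)" using q by (simp add: suminf_geometric)
      finally show ?thesis .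
    qed
    finally show "norm (suminf (gt q (X N))) \<le> 2 * norm q / (1 - norm q) * norm (X N)" by (simp add: mult_ac)
  qed
  show "(\<lambda>N. 2 * norm q / (1 - norm q) * norm (X N)) \<longlonglongrightarrow> 0"
    using tendsto_mult[OF tendsto_const tendsto_norm[OF x], of "2 * norm q / (1 - norm q)"] by simp
qed



lemma qpoch_tendsto:
  assumes "X \<longlonglongrightarrow> L" shows "(\<lambda>N. qpoch (X N) q n) \<longlonglongrightarrow> qpoch L q n"
  unfolding qpoch_def by (intro tendsto_intros assms)

lemma qpoch_zero: "qpoch 0 q n = 1" by (simp add: qpoch_def)

lemma nrm_pow_le: "norm (q::complex) \<le> 1 \<Longrightarrow> norm (q^j) \<le> 1"
  using nb1[of q 1 j] by simp

lemma Fr_bound: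
  fixes q b aN kN wN :: complex
  assumes q: "norm q \<le> 1" and a: "norm aN \<le> 1/2" and kw: "norm (kN*wN) \<le> 1/2" and w: "norm wN \<le> W"
  shows "norm ((1 - b*q^(Suc m)) * (q*aN) * (wN - q^m) / ((1 - aN*q^(m+3)) * (1 - kN*wN*q^(m+4))))
     \<le> 4*(1+norm b)*norm(q*aN)*(W+1)"
proof -
  have n1: "norm (1 - b*q^Suc m) \<le> 1 + norm b"
    using nb3[of "b*q^Suc m"] nb1[OF q, of b "Suc m"] by linarith
  have n2: "norm (wN - q^m) \<le> W + 1"
    using norm_triangle_ineq4[of wN "q^m"] nrm_pow_le[OF q, of m] w by linarith
  have d1: "norm (1 - aN*q^(m+3)) \<ge> 1/2"
  proof (rule nb2)
    show "norm (aN*q^(m+3)) \<le> 1/2" using nb1[OF q, of aN "m+3"] a by linarith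
  qed
  have d2: "norm (1 - kN*wN*q^(m+4)) \<ge> 1/2"
  proof (rule nb2)
    show "norm (kN*wN*q^(m+4)) \<le> 1/2" using nb1[OF q, of "kN*wN" "m+4"] kw by linarith
  qed
  have "norm ((1 - b*q^(Suc m)) * (q*aN) * (wN - q^m)) \<le> (1+norm b) * norm(q*aN) * (W+1)"
    unfolding norm_mult by (intro mult_mono n1 n2 order_refl) (auto intro: mult_nonneg_nonneg)
  moreover have "norm ((1 - aN*q^(m+3)) * (1 - kN*wN*q^(m+4))) \<ge> 1/2 * (1/2)"
    unfolding norm_mult by (intro mult_mono d1 d2) auto
  moreover have W0: "0 \<le> W" using w norm_ge_zero order_trans by blast
  then have "0 \<le> (1+norm b) * norm(q*aN) * (W+1)" by (intro mult_nonneg_nonneg) auto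
  ultimately have "norm ((1 - b*q^(Suc m)) * (q*aN) * (wN - q^m)) / norm ((1 - aN*q^(m+3)) * (1 - kN*wN*q^(m+4)))
      \<le> ((1+norm b) * norm(q*aN) * (W+1)) / (1/2 * (1/2))"
    by (intro frac_le) auto
  also have "((1+norm b) * norm(q*aN) * (W+1)) / (1/2 * (1/2)) = 4*(1+norm b)*norm(q*aN)*(W+1)"
    by (simp add: field_simps)
  finally show ?thesis by (simp only: norm_divide)
qed

lemma Wt_bound:
  fixes q aN kN wN :: complex
  assumes q: "norm q < 1" and k: "norm kN \<le> 1/2" "norm kN \<le> K" and a: "norm aN \<le> A"
    and kw: "norm (kN*wN) \<le> KW" and w: "norm wN \<le> W"
  shows "norm (Wt q aN kN wN m) \<le> (W+1)*(1+A)*(1+KW)*(1+KW)*(1+K) / (1/2 * (1 - norm q))"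
proof -
  have q1: "norm q \<le> 1" using q by simp
  have n1: "norm (wN - q^m) \<le> W + 1"
    using norm_triangle_ineq4[of wN "q^m"] nrm_pow_le[OF q1, of m] w by linarith
  have n2: "norm (1 - aN*q^(m+2)) \<le> 1 + A"
    using nb3[of "aN*q^(m+2)"] nb1[OF q1, of aN "m+2"] a by linarith
  have n3: "norm (1 - kN*wN*q^(m+2)) \<le> 1 + KW"
    using nb3[of "kN*wN*q^(m+2)"] nb1[OF q1, of "kN*wN" "m+2"] kw by linarith
  have n4: "norm (1 - kN*wN*q^(m+3)) \<le> 1 + KW"
    using nb3[of "kN*wN*q^(m+3)"] nb1[OF q1, of "kN*wN" "m+3"] kw by linarith
  have n5: "norm (1 - kN*q^(2*m+2)) \<le> 1 + K"
    using nb3[of "kN*q^(2*m+2)"] nb1[OF q1, of kN "2*m+2"] k by linarith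
  have d1: "norm (1 - kN*q^(m+1)) \<ge> 1/2"
  proof (rule nb2)
    show "norm (kN*q^(m+1)) \<le> 1/2" using nb1[OF q1, of kN "m+1"] k by linarith
  qed
  have d2: "norm (1 - q^(m+1)) \<ge> 1 - norm q"
  proof -
    have "norm q ^ (m+1) \<le> norm q ^ 1" by (rule power_decreasing) (use q in auto)
    then have "norm (q^(m+1)) \<le> norm q" by (simp add: norm_power norm_mult)
    moreover have "norm (1::complex) \<le> norm (1 - q^(m+1)) + norm (q^(m+1))"
      using norm_triangle_ineq[of "1 - q^(m+1)" "q^(m+1)"] by simp
    ultimately show ?thesis by simp
  qed
  have W0: "0 \<le> W" using w norm_ge_zero order_trans by blast
  have A0: "0 \<le> A" using a norm_ge_zero order_trans by blast
  have KW0: "0 \<le> KW" using kw norm_ge_zero order_trans by blast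
  have K0: "0 \<le> K" using k norm_ge_zero order_trans by blast
  have num: "norm ((wN - q^m) * (1 - aN*q^(m+2)) * (1 - kN*wN*q^(m+2)) * (1 - kN*wN*q^(m+3)) * (1 - kN*q^(2*m+2)))
     \<le> (W+1)*(1+A)*(1+KW)*(1+KW)*(1+K)"
    unfolding norm_mult by (intro mult_mono n1 n2 n3 n4 n5) (use W0 A0 KW0 K0 in \<open>auto intro!: mult_nonneg_nonneg\<close>)
  have den: "norm ((1 - kN*q^(m+1)) * (1 - q^(m+1))) \<ge> 1/2 * (1 - norm q)"
    unfolding norm_mult by (intro mult_mono d1 d2) (use q in auto)
  have "norm (Wt q aN kN wN m) = norm ((wN - q^m) * (1 - aN*q^(m+2)) * (1 - kN*wN*q^(m+2)) * (1 - kN*wN*q^(m+3)) * (1 - kN*q^(2*m+2)))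
     / norm ((1 - kN*q^(m+1)) * (1 - q^(m+1)))"
    unfolding Wt_def norm_divide ..
  also have "\<dots> \<le> (W+1)*(1+A)*(1+KW)*(1+KW)*(1+K) / (1/2 * (1 - norm q))"
    using num den q W0 A0 KW0 K0 by (intro frac_le) (auto intro!: mult_nonneg_nonneg)
  finally show ?thesis .
qed



lemma Hyp_N: assumes H: "Hyp q a k w" shows "Hyp q (a*q^N) (k*q^N) (w*q^N)"
proof (induction N)
  case 0 then show ?case using H by simp
next
  case (Suc N)
  have e: "x*q^Suc N = x*q^N*q" for x :: complex by (simp add: power_Suc2 mult.assoc)
  show ?case unfolding e by (rule Hyp_shift[OF Suc.IH])
qed

lemma ev_half: "(X \<longlonglongrightarrow> (0::complex)) \<Longrightarrow> eventually (\<lambda>N. norm (X N) \<le> 1/2) sequentially"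
proof -
  assume x: "X \<longlonglongrightarrow> 0"
  have "(\<lambda>N. norm (X N)) \<longlonglongrightarrow> norm (0::complex)" by (rule tendsto_norm[OF x])
  moreover have "norm (0::complex) < 1/2" by simp
  ultimately have "eventually (\<lambda>N. norm (X N) < 1/2) sequentially" by (rule order_tendstoD(2))
  then show ?thesis by (rule eventually_mono) simp
qed

lemma ev_half_r: "(Y \<longlonglongrightarrow> (0::real)) \<Longrightarrow> eventually (\<lambda>N. Y N \<le> 1/2) sequentially"
proof -
  assume y: "Y \<longlonglongrightarrow> 0"
  have "(0::real) < 1/2" by simp
  from order_tendstoD(2)[OF y this] show ?thesis by (rule eventually_mono) simp
qed

lemma CN_lim:
  assumes q: "norm q < 1"
  shows "(\<lambda>N. Cm q b (a*q^N) (k*q^N) (w*q^N) 0) \<longlonglongrightarrow> 0"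
proof -
  have "(\<lambda>N. Cm q b (a*q^N) (k*q^N) (w*q^N) 0) \<longlonglongrightarrow>
      qpoch b q (Suc 0) * (q*(a*0))^Suc 0 * (\<Prod>j<0. w*0 - q^j) / (qpoch (q*(a*0)) q (0+2) * qpoch (q*(k*0*(w*0))) q (0+3))"
    unfolding Cm_def by (intro tendsto_intros qpoch_tendsto qlim0 q) (simp add: qpoch_zero)
  then show ?thesis by simp
qed

lemma L_lim:
  assumes H: "Hyp q a k w"
  shows "(\<lambda>N. suminf (Tt q b (a*q^N) (k*q^N) (w*q^N))) \<longlonglongrightarrow> 0"
proof -
  have q: "norm q < 1" using H unfolding Hyp_def by auto
  have q1: "norm q \<le> 1" using q by simp
  define B0 where "B0 = (norm w+1)*(1+norm a)*(1+norm (k*w))*(1+norm (k*w))*(1+norm k) / (1/2 * (1 - norm q))"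
  define CN where "CN N = Cm q b (a*q^N) (k*q^N) (w*q^N) 0" for N
  have e1: "eventually (\<lambda>N. norm (a*q^N) \<le> 1/2) sequentially"
    by (rule ev_half) (use tendsto_mult[OF tendsto_const qlim0[OF q], of a] in simp)
  have e2: "eventually (\<lambda>N. norm (k*q^N) \<le> 1/2) sequentially"
    by (rule ev_half) (use tendsto_mult[OF tendsto_const qlim0[OF q], of k] in simp)
  have e3: "eventually (\<lambda>N. norm (k*q^N*(w*q^N)) \<le> 1/2) sequentially"
  proof (rule ev_half)
    have "(\<lambda>N. k*q^N*(w*q^N)) \<longlonglongrightarrow> k*0*(w*0)" by (intro tendsto_intros qlim0 q)
    then show "(\<lambda>N. k*q^N*(w*q^N)) \<longlonglongrightarrow> 0" by simp
  qed
  have e4: "eventually (\<lambda>N. 4*(1+norm b)*norm(q*(a*q^N))*(norm w+1) \<le> 1/2) sequentially"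
  proof (rule ev_half_r)
    have "(\<lambda>N. 4*(1+norm b)*norm(q*(a*q^N))*(norm w+1)) \<longlonglongrightarrow> 4*(1+norm b)*norm(q*(a*0))*(norm w+1)"
      by (intro tendsto_intros qlim0 q)
    then show "(\<lambda>N. 4*(1+norm b)*norm(q*(a*q^N))*(norm w+1)) \<longlonglongrightarrow> 0" by simp
  qed
  have bnd: "norm (suminf (Tt q b (a*q^N) (k*q^N) (w*q^N))) \<le> 2*B0*norm (CN N)"
    if c1: "norm (a*q^N) \<le> 1/2" and c2: "norm (k*q^N) \<le> 1/2" and c3: "norm (k*q^N*(w*q^N)) \<le> 1/2"
      and c4: "4*(1+norm b)*norm(q*(a*q^N))*(norm w+1) \<le> 1/2" for N
  proof -
    have HN: "Hyp q (a*q^N) (k*q^N) (w*q^N)" by (rule Hyp_N[OF H])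
    have wN: "norm (w*q^N) \<le> norm w" by (rule nb1[OF q1])
    have aN: "norm (a*q^N) \<le> norm a" by (rule nb1[OF q1])
    have kN: "norm (k*q^N) \<le> norm k" by (rule nb1[OF q1])
    have kwN: "norm (k*q^N*(w*q^N)) \<le> norm (k*w)"
    proof -
      have eq: "k*q^N*(w*q^N) = (k*w)*q^(N+N)" unfolding power_add by (simp only: mult_ac)
      show ?thesis unfolding eq by (rule nb1[OF q1])
    qed
    have fr: "norm ((1 - b*q^(Suc m)) * (q*(a*q^N)) * (w*q^N - q^m) / ((1 - a*q^N*q^(m+3)) * (1 - k*q^N*(w*q^N)*q^(m+4)))) \<le> 1/2" for m
      using Fr_bound[OF q1 c1 c3 wN, of b m] c4 by linarith
    have decay: "norm (Cm q b (a*q^N) (k*q^N) (w*q^N) m) \<le> norm (CN N) * (1/2)^m" for m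
    proof (induction m)
      case 0 then show ?case by (simp add: CN_def)
    next
      case (Suc m)
      have "norm (Cm q b (a*q^N) (k*q^N) (w*q^N) (Suc m)) = norm (Cm q b (a*q^N) (k*q^N) (w*q^N) m) *
         norm ((1 - b*q^(Suc m)) * (q*(a*q^N)) * (w*q^N - q^m) / ((1 - a*q^N*q^(m+3)) * (1 - k*q^N*(w*q^N)*q^(m+4))))"
        unfolding Cm_Suc[OF HN] norm_mult ..
      also have "\<dots> \<le> (norm (CN N) * (1/2)^m) * (1/2)"
        using Suc.IH fr[of m] by (intro mult_mono) auto
      finally show ?case by simp
    qed
    have wt: "norm (Wt q (a*q^N) (k*q^N) (w*q^N) m) \<le> B0" for m
      unfolding B0_def by (rule Wt_bound[OF q c2 kN aN kwN wN])
    have tt: "norm (Tt q b (a*q^N) (k*q^N) (w*q^N) m) \<le> B0 * norm (CN N) * (1/2)^m" for m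
    proof -
      have "norm (Tt q b (a*q^N) (k*q^N) (w*q^N) m) = norm (Cm q b (a*q^N) (k*q^N) (w*q^N) m) * norm (Wt q (a*q^N) (k*q^N) (w*q^N) m)"
        by (simp add: Tt_def norm_mult)
      also have "\<dots> \<le> (norm (CN N) * (1/2)^m) * B0"
        using decay[of m] wt[of m] by (intro mult_mono) auto
      finally show ?thesis by (simp add: mult_ac)
    qed
    have s: "summable (\<lambda>m. B0 * norm (CN N) * (1/2::real)^m)"
      by (intro summable_mult summable_geometric) simp
    have "norm (suminf (Tt q b (a*q^N) (k*q^N) (w*q^N))) \<le> (\<Sum>m. B0 * norm (CN N) * (1/2::real)^m)"
      by (rule norm_suminf_le[OF tt s])
    also have "\<dots> = B0 * norm (CN N) * (\<Sum>m. (1/2::real)^m)"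
      by (rule suminf_mult) (intro summable_geometric, simp)
    also have "(\<Sum>m. (1/2::real)^m) = 2" using suminf_geometric[of "1/2::real"] by simp
    finally show ?thesis by (simp add: mult_ac)
  qed
  show ?thesis
  proof (rule Lim_null_comparison)
    show "eventually (\<lambda>N. norm (suminf (Tt q b (a*q^N) (k*q^N) (w*q^N))) \<le> 2*B0*norm (CN N)) sequentially"
      using e1 e2 e3 e4 by eventually_elim (rule bnd)
    have "(\<lambda>N. 2*B0*norm (CN N)) \<longlonglongrightarrow> 2*B0*norm (0::complex)"
      unfolding CN_def by (intro tendsto_intros CN_lim q)
    then show "(\<lambda>N. 2*B0*norm (CN N)) \<longlonglongrightarrow> 0" by simp
  qed
qed



lemma main_id:
  assumes H: "Hyp q a k w" and kb: "k = b*a"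
  shows "suminf (Tt q b a k w) = Rs q a k w"
proof -
  have q: "norm q < 1" using H unfolding Hyp_def by auto
  define G where "G N = suminf (Tt q b (a*q^N) (k*q^N) (w*q^N)) - Rs q (a*q^N) (k*q^N) (w*q^N)" for N
  have step: "G (Suc N) = G N" for N
  proof -
    have HN: "Hyp q (a*q^N) (k*q^N) (w*q^N)" by (rule Hyp_N[OF H])
    have kbN: "k*q^N = b*(a*q^N)" using kb by simp
    have e: "x*q^Suc N = x*q^N*q" for x :: complex by (simp add: power_Suc2 mult.assoc)
    have L: "suminf (Tt q b (a*q^N) (k*q^N) (w*q^N)) - suminf (Tt q b (a*q^N*q) (k*q^N*q) (w*q^N*q)) = rho q (a*q^N) (k*q^N) (w*q^N)"
      by (rule L_shift[OF HN kbN])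
    have R: "Rs q (a*q^N) (k*q^N) (w*q^N) - Rs q (a*q^N*q) (k*q^N*q) (w*q^N*q) = rho q (a*q^N) (k*q^N) (w*q^N)"
      by (rule R_shift[OF q])
    show ?thesis unfolding G_def e using L R by (simp add: algebra_simps)
  qed
  have const: "G N = G 0" for N by (induction N) (use step in auto)
  have lim: "G \<longlonglongrightarrow> 0"
  proof -
    have r1: "(\<lambda>N. suminf (gt q (k*q^N))) \<longlonglongrightarrow> 0"
      by (rule g_lim[OF q]) (use tendsto_mult[OF tendsto_const qlim0[OF q], of k] in simp)
    have r2: "(\<lambda>N. suminf (gt q (a*q^N*(w*q^N)))) \<longlonglongrightarrow> 0"
    proof (rule g_lim[OF q])
      have "(\<lambda>N. a*q^N*(w*q^N)) \<longlonglongrightarrow> a*0*(w*0)" by (intro tendsto_intros qlim0 q)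
      then show "(\<lambda>N. a*q^N*(w*q^N)) \<longlonglongrightarrow> 0" by simp
    qed
    have r3: "(\<lambda>N. suminf (gt q (a*q^N))) \<longlonglongrightarrow> 0"
      by (rule g_lim[OF q]) (use tendsto_mult[OF tendsto_const qlim0[OF q], of a] in simp)
    have r4: "(\<lambda>N. suminf (gt q (k*q^N*(w*q^N)))) \<longlonglongrightarrow> 0"
    proof (rule g_lim[OF q])
      have "(\<lambda>N. k*q^N*(w*q^N)) \<longlonglongrightarrow> k*0*(w*0)" by (intro tendsto_intros qlim0 q)
      then show "(\<lambda>N. k*q^N*(w*q^N)) \<longlonglongrightarrow> 0" by simp
    qed
    have "G \<longlonglongrightarrow> 0 - (0 + 0 - 0 - 0)"
      unfolding G_def[abs_def] Rs_def by (intro tendsto_intros L_lim[OF H] r1 r2 r3 r4)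
    then show ?thesis by simp
  qed
  have "G 0 = 0"
  proof -
    have eqG: "(\<lambda>N. G 0) = G" by (rule ext) (rule const[symmetric])
    have "(\<lambda>N. G 0) \<longlonglongrightarrow> 0" using lim unfolding eqG .
    then show ?thesis using LIMSEQ_const_iff by blast
  qed
  then show ?thesis unfolding G_def by simp
qed

lemma link_alg:
  fixes A1 A2 S1 S2 K K' Z Zk Qa Bk Pw E F X5 X6 k c1 c2 d1 e1 e2 p w Qn :: complex
  assumes R1: "A1*A2*(1-k) = S1*S2*(1-c2)"
  and R2: "K*(1-c1) = K'*(1-k)"
  and R3: "Z*E = F*(Pw*(w-p))"
  and R5: "X5 = Qa*(1-d1)"
  and R6: "X6 = Zk*(1-e1)*(1-e2)"
  and nz: "S1 \<noteq> 0" "S2 \<noteq> 0" "K' \<noteq> 0" "Zk \<noteq> 0" "Qa \<noteq> 0" "1-Qn \<noteq> 0" "1-k \<noteq> 0" "1-c1 \<noteq> 0"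
     "1-d1 \<noteq> 0" "1-e1 \<noteq> 0" "1-e2 \<noteq> 0"
  shows "A1*A2*K*Z*Bk/(S1*S2*K'*Zk*Qa*(1-Qn))*E
       = Bk*F*Pw/(X5*X6) * ((w-p)*(1-d1)*(1-e1)*(1-e2)*(1-c2)/((1-c1)*(1-Qn)))"
proof -
  have d1: "S1*S2*K'*Zk*Qa*(1-Qn) \<noteq> 0" using nz by simp
  have d2: "X5*X6*((1-c1)*(1-Qn)) \<noteq> 0" using nz unfolding R5 R6 by simp
  have l: "A1*A2*K*Z*Bk/(S1*S2*K'*Zk*Qa*(1-Qn))*E = (A1*A2*K*Z*Bk*E)/(S1*S2*K'*Zk*Qa*(1-Qn))"
    by (rule times_divide_eq_left)
  have r: "Bk*F*Pw/(X5*X6) * ((w-p)*(1-d1)*(1-e1)*(1-e2)*(1-c2)/((1-c1)*(1-Qn)))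
     = (Bk*F*Pw*((w-p)*(1-d1)*(1-e1)*(1-e2)*(1-c2)))/(X5*X6*((1-c1)*(1-Qn)))"
    by (rule times_divide_times_eq)
  have "A1*A2*K*Z*Bk*E * (X5*X6*((1-c1)*(1-Qn))) = Bk*F*Pw*((w-p)*(1-d1)*(1-e1)*(1-e2)*(1-c2)) * (S1*S2*K'*Zk*Qa*(1-Qn))"
    using R1 R2 R3 R5 R6 nz(7) by algebra
  then show ?thesis unfolding l r frac_eq_eq[OF d1 d2] .
qed

lemma sq_rel: "qpoch (q*u) q n * qpoch (-q*u) q n * (1 - u^2) = qpoch u q n * qpoch (-u) q n * (1 - u^2*q^(2*n))"
proof (induction n)
  case 0 then show ?case by (simp add: qpoch_def)
next
  case (Suc n)
  have "qpoch (q*u) q (Suc n) * qpoch (-q*u) q (Suc n) * (1 - u^2)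
      = (qpoch (q*u) q n * qpoch (-q*u) q n * (1 - u^2)) * ((1 - q*u*q^n)*(1 + q*u*q^n))"
    by (simp add: qpoch_Suc mult_ac)
  also have "\<dots> = qpoch u q n * qpoch (-u) q n * (1 - u^2*q^(2*n)) * ((1 - q*u*q^n)*(1 + q*u*q^n))"
    by (simp only: Suc.IH)
  also have "\<dots> = qpoch u q (Suc n) * qpoch (-u) q (Suc n) * (1 - u^2*q^(2*Suc n))"
    by (simp add: qpoch_Suc power_add power_mult power2_eq_square algebra_simps)
  finally show ?case .
qed

lemma z_rel:
  fixes z q a :: complex
  assumes z: "z \<noteq> 0"
  shows "qpoch z q n * (q*a/z)^n = (q*a)^n * (\<Prod>j<n. 1/z - q^j)"
proof (induction n)
  case 0 then show ?case by (simp add: qpoch_def)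
next
  case (Suc n)
  have "qpoch z q (Suc n) * (q*a/z)^Suc n = (qpoch z q n * (q*a/z)^n) * ((1 - z*q^n) * (q*a/z))"
    by (simp add: qpoch_Suc mult_ac)
  also have "(1 - z*q^n) * (q*a/z) = (q*a) * (1/z - q^n)" using z by (simp add: field_simps)
  finally show ?case using Suc.IH by (simp add: mult_ac)
qed



theorem lemma2p3:
  fixes a k z q :: complex
  assumes "norm q < 1" and "norm (q * a) < norm z"
    and "\<And>n. qpoch (csqrt k) q n \<noteq> 0" and "\<And>n. qpoch (- csqrt k) q n \<noteq> 0"
    and "\<And>n. qpoch (q * k) q n \<noteq> 0" and "\<And>n. qpoch (q * k / z) q n \<noteq> 0"
    and "\<And>n. qpoch (q * a) q n \<noteq> 0"
    and "a \<noteq> 0"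
    and "\<And>n. n \<ge> 1 \<Longrightarrow> 1 - q ^ n \<noteq> 0"
    and "\<And>n. n \<ge> 1 \<Longrightarrow> 1 - k * q ^ n \<noteq> 0"
    and "\<And>n. n \<ge> 1 \<Longrightarrow> 1 - q ^ n * a / z \<noteq> 0"
    and "\<And>n. n \<ge> 1 \<Longrightarrow> 1 - a * q ^ n \<noteq> 0"
    and "\<And>n. n \<ge> 1 \<Longrightarrow> 1 - q ^ n * k / z \<noteq> 0"
  shows "summable (\<lambda>n. f_term a k z q (Suc n))
    \<and> summable (\<lambda>n. k * q ^ Suc n / (1 - k * q ^ Suc n))
    \<and> summable (\<lambda>n. q ^ Suc n * a / z / (1 - q ^ Suc n * a / z))
    \<and> summable (\<lambda>n. a * q ^ Suc n / (1 - a * q ^ Suc n))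
    \<and> summable (\<lambda>n. q ^ Suc n * k / z / (1 - q ^ Suc n * k / z))
    \<and> f a k z q =
        (\<Sum>n. k * q ^ Suc n / (1 - k * q ^ Suc n))
      + (\<Sum>n. q ^ Suc n * a / z / (1 - q ^ Suc n * a / z))
      - (\<Sum>n. a * q ^ Suc n / (1 - a * q ^ Suc n))
      - (\<Sum>n. q ^ Suc n * k / z / (1 - q ^ Suc n * k / z))"
proof (cases "q = 0")
  case True
  have ft: "f_term a k z q (Suc n) = 0" for n unfolding f_term_def True by simp
  show ?thesis unfolding f_def ft using True by simp
next
  case False
  have q: "norm q < 1" by (rule assms(1))
  have z: "z \<noteq> 0" using assms(2) by auto
  define w where "w = 1/z"
  define b where "b = k/a"
  have kb: "k = b*a" unfolding b_def using assms(8) by simp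
  have aw: "q^n * a / z = a*w*q^n" for n unfolding w_def by (simp add: field_simps)
  have kw: "q^n * k / z = k*w*q^n" for n unfolding w_def by (simp add: field_simps)
  have H: "Hyp q a k w"
  proof -
    have "norm (q*a*w) = norm (q*a) / norm z" unfolding w_def by (simp add: norm_divide norm_mult)
    also have "\<dots> < 1" using assms(2) z by simp
    finally have 1: "norm (q*a*w) < 1" .
    have 2: "1 - k*q^Suc e \<noteq> 0" for e using assms(10)[of "Suc e"] by simp
    have 3: "1 - a*q^Suc e \<noteq> 0" for e using assms(12)[of "Suc e"] by simp
    have 4: "1 - (k*w)*q^Suc e \<noteq> 0" for e using assms(13)[of "Suc e"] unfolding kw by simp
    show ?thesis unfolding Hyp_def using False q 1 2 3 4 by blast
  qed
  have k1: "1 - k \<noteq> 0"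
  proof -
    have "qpoch (csqrt k) q 1 * qpoch (- csqrt k) q 1 \<noteq> 0" using assms(3,4) by simp
    moreover have "qpoch (csqrt k) q 1 * qpoch (- csqrt k) q 1 = 1 - (csqrt k)^2"
      by (simp add: qpoch_def power2_eq_square algebra_simps)
    moreover have "(csqrt k)^2 = k" by simp
    ultimately show ?thesis by metis
  qed
  have link: "f_term a k z q (Suc m) = Tt q b a k w m" for m
  proof -
    have R1: "qpoch (q*csqrt k) q (m+1) * qpoch (-q*csqrt k) q (m+1) * (1-k)
        = qpoch (csqrt k) q (m+1) * qpoch (-csqrt k) q (m+1) * (1 - k*q^(2*m+2))"
      using sq_rel[of q "csqrt k" "m+1"] by simp
    have R2: "qpoch k q (m+1) * (1 - k*q^(m+1)) = qpoch (q*k) q (m+1) * (1-k)"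
      using qpoch_shift[of k q "m+1"] by (simp add: qpoch_Suc mult.commute)
    have R3: "qpoch z q (m+1) * (q*a/z)^(m+1) = (q*a)^(m+1) * ((\<Prod>j<m. w - q^j) * (w - q^m))"
      using z_rel[OF z, where q=q and a=a and n="m+1"] unfolding w_def by simp
    have R5: "qpoch (q*a) q (m+2) = qpoch (q*a) q (m+1) * (1 - a*q^(m+2))"
    proof -
      have "qpoch (q*a) q (m+2) = qpoch (q*a) q (Suc (m+1))" by simp
      also have "\<dots> = qpoch (q*a) q (m+1) * (1 - q*a*q^(m+1))" by (rule qpoch_Suc)
      finally show ?thesis by (simp add: mult_ac)
    qed
    have R6: "qpoch (q*(k*w)) q (m+3) = qpoch (q*(k*w)) q (m+1) * (1 - k*w*q^(m+2)) * (1 - k*w*q^(m+3))"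
    proof -
      have "qpoch (q*(k*w)) q (m+3) = qpoch (q*(k*w)) q (Suc (Suc (m+1)))" by (simp add: eval_nat_numeral)
      also have "\<dots> = qpoch (q*(k*w)) q (m+1) * (1 - q*(k*w)*q^(m+1)) * (1 - q*(k*w)*q^(Suc (m+1)))"
        by (simp only: qpoch_Suc)
      finally show ?thesis by (simp add: mult_ac power_add eval_nat_numeral)
    qed
    have R4: "q*k/z = q*(k*w)" unfolding w_def by simp
    have nz: "qpoch (csqrt k) q (m+1) \<noteq> 0" "qpoch (-csqrt k) q (m+1) \<noteq> 0" "qpoch (q*k) q (m+1) \<noteq> 0"
      "qpoch (q*(k*w)) q (m+1) \<noteq> 0" "qpoch (q*a) q (m+1) \<noteq> 0" "1 - q^(m+1) \<noteq> 0" "1 - k \<noteq> 0"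
      "1 - k*q^(m+1) \<noteq> 0" "1 - a*q^(m+2) \<noteq> 0" "1 - k*w*q^(m+2) \<noteq> 0" "1 - k*w*q^(m+3) \<noteq> 0"
      using assms(3,4,5,7) assms(6)[unfolded R4] assms(9)[of "m+1"] k1 assms(10)[of "m+1"] assms(12)[of "m+2"]
        Hyp_nz'[OF H, of "m+2"] Hyp_nz'[OF H, of "m+3"] by auto
    show ?thesis
      unfolding f_term_def Tt_def Cm_def Wt_def Suc_eq_plus1 R4 b_def
      by (rule link_alg[OF R1 R2 R3 R5 R6 nz])
  qed
  have fe: "(\<lambda>n. f_term a k z q (Suc n)) = Tt q b a k w" by (rule ext) (rule link)
  have g1: "(\<lambda>n. k * q ^ Suc n / (1 - k * q ^ Suc n)) = gt q k" by (rule ext) (simp add: gt_def)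
  have g2: "(\<lambda>n. q ^ Suc n * a / z / (1 - q ^ Suc n * a / z)) = gt q (a*w)"
    by (rule ext) (simp only: gt_def aw)
  have g3: "(\<lambda>n. a * q ^ Suc n / (1 - a * q ^ Suc n)) = gt q a" by (rule ext) (simp add: gt_def)
  have g4: "(\<lambda>n. q ^ Suc n * k / z / (1 - q ^ Suc n * k / z)) = gt q (k*w)"
    by (rule ext) (simp only: gt_def kw)
  have main: "f a k z q = Rs q a k w"
    unfolding f_def fe by (rule main_id[OF H kb])
  show ?thesis
    unfolding fe g1 g2 g3 g4 main Rs_def
    using Tt_summable[OF H] g_summable[OF q] by blast
qed


end
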